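(* Let $n\geq 3$. If $T\in\mathcal{T}_n$ is a star triangulation, then $\chi(\mathrm{KG}(\mathcal{T}_n\setminus\{T\}))\leq n-3$.
   Context: Label the vertices of a convex $n$-gon by $1,\dots,n$ in cyclic order; $\mathrm{Diag}_n = \{\{i,j\} \subseteq [n]: i-j\not\equiv \pm1 \pmod n\}$; a triangulation is identified with its set of diagonals, and $\mathcal{T}_n$ is the set of triangulations. For a set system $\mathcal{F}$, $\mathrm{KG}(\mathcal{F})$ is the graph on $\mathcal{F}$ with $F,F'$ adjacent iff $F\cap F'=\emptyset$. A star triangulation is one consisting of the $n-3$ diagonals emanating from a single vertex. *)

theory Defs
  imports Main
begin

text \<open>Vertices of the convex n-gon are 1..n in cyclic order. Diagonals are
  2-element sets {i,j} of vertices that are not cyclically adjacent.\<close>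
definition Diag :: "nat \<Rightarrow> nat set set" where
  "Diag n = {{i, j} | i j. i \<in> {1..n} \<and> j \<in> {1..n} \<and> i \<noteq> j \<and>
      (int i - int j) mod int n \<noteq> 1 mod int n \<and>
      (int i - int j) mod int n \<noteq> (-1) mod int n}"

text \<open>Two diagonals cross iff their endpoints strictly interleave in the cyclic
  (equivalently, linear) order of the labels.\<close>
definition crosses :: "nat set \<Rightarrow> nat set \<Rightarrow> bool" where
  "crosses D E \<longleftrightarrow>
     (\<exists>a b c d. D = {a, b} \<and> E = {c, d} \<and> a < c \<and> c < b \<and> b < d) \<or>
     (\<exists>a b c d. E = {a, b} \<and> D = {c, d} \<and> a < c \<and> c < b \<and> b < d)"

definition noncrossing :: "nat set set \<Rightarrow> bool" where
  "noncrossing S \<longleftrightarrow> (\<forall>D\<in>S. \<forall>E\<in>S. \<not> crosses D E)"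

text \<open>A triangulation (as its set of diagonals) is a maximal set of pairwise
  non-crossing diagonals.\<close>
definition triangulations :: "nat \<Rightarrow> nat set set set" where
  "triangulations n = {S. S \<subseteq> Diag n \<and> noncrossing S \<and>
      (\<forall>D \<in> Diag n - S. \<not> noncrossing (insert D S))}"

definition star_triangulation :: "nat \<Rightarrow> nat set set \<Rightarrow> bool" where
  "star_triangulation n T \<longleftrightarrow> T \<in> triangulations n \<and>
      (\<exists>v \<in> {1..n}. T = {D \<in> Diag n. v \<in> D})"

definition KG_adj :: "'a set \<Rightarrow> 'a set \<Rightarrow> bool" where
  "KG_adj F F' \<longleftrightarrow> F \<inter> F' = {}"

definition chromatic_number :: "'v set \<Rightarrow> ('v \<Rightarrow> 'v \<Rightarrow> bool) \<Rightarrow> nat" where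
  "chromatic_number V adj = (LEAST k. \<exists>c :: 'v \<Rightarrow> nat.
      (\<forall>x\<in>V. c x < k) \<and> (\<forall>x\<in>V. \<forall>y\<in>V. adj x y \<longrightarrow> c x \<noteq> c y))"

end

theory Submission imports Defs begin

definition betw :: "nat \<Rightarrow> nat \<Rightarrow> nat \<Rightarrow> bool" where
  "betw x y z \<longleftrightarrow> min x y < z \<and> z < max x y"

definition crl :: "nat \<Rightarrow> nat \<Rightarrow> nat \<Rightarrow> nat \<Rightarrow> bool" where
  "crl a b c d \<longleftrightarrow> a \<noteq> b \<and> a \<noteq> c \<and> a \<noteq> d \<and> b \<noteq> c \<and> b \<noteq> d \<and> c \<noteq> d \<and>
     (betw a b c \<longleftrightarrow> \<not> betw a b d)"

lemma crosses_imp: "crosses {a,b} {c,d} \<Longrightarrow> crl a b c d"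
  unfolding crosses_def
proof (elim disjE exE conjE)
  fix x y z w assume h: "{a,b} = {x,y}" "{c,d} = {z,w}" "x < z" "z < y" "y < w"
  from h(1) have "(a = x \<and> b = y) \<or> (a = y \<and> b = x)" by (auto simp: doubleton_eq_iff)
  moreover from h(2) have "(c = z \<and> d = w) \<or> (c = w \<and> d = z)" by (auto simp: doubleton_eq_iff)
  ultimately show "crl a b c d" using h(3-5) unfolding crl_def betw_def by (auto simp: min_def max_def)
next
  fix x y z w assume h: "{c,d} = {x,y}" "{a,b} = {z,w}" "x < z" "z < y" "y < w"
  from h(2) have "(a = z \<and> b = w) \<or> (a = w \<and> b = z)" by (auto simp: doubleton_eq_iff)
  moreover from h(1) have "(c = x \<and> d = y) \<or> (c = y \<and> d = x)" by (auto simp: doubleton_eq_iff)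
  ultimately show "crl a b c d" using h(3-5) unfolding crl_def betw_def by (auto simp: min_def max_def)
qed

lemma crosses_rev: "crl a b c d \<Longrightarrow> crosses {a,b} {c,d}"
proof -
  assume c: "crl a b c d"
  define x where "x = min a b"
  define y where "y = max a b"
  define z where "z = min c d"
  define w where "w = max c d"
  have ab: "{a,b} = {x,y}" unfolding x_def y_def by (auto simp: min_def max_def)
  have cd: "{c,d} = {z,w}" unfolding z_def w_def by (auto simp: min_def max_def)
  have "(x < z \<and> z < y \<and> y < w) \<or> (z < x \<and> x < w \<and> w < y)"
    using c unfolding crl_def betw_def x_def y_def z_def w_def by (auto simp: min_def max_def)
  then show ?thesis unfolding crosses_def using ab cd by blast
qed

lemma crosses_iff: "crosses {a,b} {c,d} \<longleftrightarrow> crl a b c d"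
  using crosses_imp crosses_rev by blast

definition qq :: "nat \<Rightarrow> nat \<Rightarrow> nat \<Rightarrow> nat" where
  "qq n v x = (x + n - v) mod n"

lemma qq_eq: "v \<in> {1..n} \<Longrightarrow> x \<in> {1..n} \<Longrightarrow> qq n v x = (if v \<le> x then x - v else x + n - v)"
  unfolding qq_def
proof (cases "v \<le> x")
  case True
  assume "v \<in> {1..n}" "x \<in> {1..n}"
  then have e: "x + n - v = (x - v) + n" using True by auto
  have "(x - v) mod n = x - v" using True \<open>x \<in> {1..n}\<close> \<open>v \<in> {1..n}\<close> by auto
  then show "(x + n - v) mod n = (if v \<le> x then x - v else x + n - v)" using True by (simp only: e mod_add_self2) simp
next
  case False
  assume "v \<in> {1..n}" "x \<in> {1..n}"
  then show "(x + n - v) mod n = (if v \<le> x then x - v else x + n - v)" using False by auto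
qed

lemma betw_alt: "betw x y z \<longleftrightarrow> (x < z \<and> z < y) \<or> (y < z \<and> z < x)"
  unfolding betw_def by (auto simp: min_def max_def)

lemma qq_inj:
  assumes "v \<in> {1..n}" "a \<in> {1..n}" "b \<in> {1..n}"
  shows "qq n v a = qq n v b \<longleftrightarrow> a = b"
  using assms by (cases "v \<le> a"; cases "v \<le> b"; simp add: qq_eq; arith)

lemma betw_same:
  assumes "v \<in> {1..n}" "a \<in> {1..n}" "b \<in> {1..n}" "c \<in> {1..n}" "(v \<le> a) = (v \<le> b)"
  shows "betw (qq n v a) (qq n v b) (qq n v c) \<longleftrightarrow> betw a b c"
  using assms unfolding betw_alt
  by (cases "v \<le> a"; cases "v \<le> c"; simp add: qq_eq; linarith)

lemma betw_diff:
  assumes "v \<in> {1..n}" "a \<in> {1..n}" "b \<in> {1..n}" "c \<in> {1..n}" "(v \<le> a) \<noteq> (v \<le> b)"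
    "c \<noteq> a" "c \<noteq> b"
  shows "betw (qq n v a) (qq n v b) (qq n v c) \<longleftrightarrow> \<not> betw a b c"
  using assms unfolding betw_alt
  by (cases "v \<le> a"; cases "v \<le> c"; simp add: qq_eq; linarith)

lemma crl_qq:
  assumes "v \<in> {1..n}" "a \<in> {1..n}" "b \<in> {1..n}" "c \<in> {1..n}" "d \<in> {1..n}"
  shows "crl (qq n v a) (qq n v b) (qq n v c) (qq n v d) \<longleftrightarrow> crl a b c d"
proof (cases "(v \<le> a) = (v \<le> b)")
  case True
  then show ?thesis unfolding crl_def using assms qq_inj[OF assms(1)] betw_same[OF assms(1-3)]
    by (metis assms(4) assms(5)) 
next
  case False
  then show ?thesis unfolding crl_def using assms qq_inj[OF assms(1)] betw_diff[OF assms(1-3)]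
    by (metis assms(4) assms(5)) 
qed


lemma qq_int:
  assumes "v \<in> {1..n}" "x \<in> {1..n}"
  shows "int (qq n v x) = int x - int v + int n * (if v \<le> x then 0 else 1)"
  using assms by (simp add: qq_eq of_nat_diff)

lemma qq_mod:
  assumes "v \<in> {1..n}" "x \<in> {1..n}" "y \<in> {1..n}"
  shows "(int x - int y) mod int n = (int (qq n v x) - int (qq n v y)) mod int n"
proof -
  have "int (qq n v x) - int (qq n v y) = (int x - int y) + int n * ((if v \<le> x then 0 else 1) - (if v \<le> y then 0 else 1))"
    using qq_int[OF assms(1,2)] qq_int[OF assms(1,3)] by (simp add: algebra_simps)
  then show ?thesis by simp
qed

lemma qq_lt: "v \<in> {1..n} \<Longrightarrow> x \<in> {1..n} \<Longrightarrow> qq n v x < n"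
  by (auto simp: qq_eq)

lemma qq_zero: "v \<in> {1..n} \<Longrightarrow> x \<in> {1..n} \<Longrightarrow> qq n v x = 0 \<longleftrightarrow> x = v"
  by (simp add: qq_eq)

lemma qq_surj:
  assumes "v \<in> {1..n}" "y < n"
  shows "\<exists>x\<in>{1..n}. qq n v x = y"
proof -
  have inj: "inj_on (qq n v) {1..n}" using qq_inj[OF assms(1)] by (auto simp: inj_on_def)
  have sub: "qq n v ` {1..n} \<subseteq> {..<n}" using qq_lt[OF assms(1)] by auto
  have "card (qq n v ` {1..n}) = card {..<n}" using card_image[OF inj] by simp
  then have "qq n v ` {1..n} = {..<n}" using sub by (simp add: card_subset_eq)
  then show ?thesis using assms(2) by (metis imageE lessThan_iff)
qed

lemma crosses_sym: "crosses X Y = crosses Y X"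
  unfolding crosses_def by blast

lemma diag_elim:
  assumes "D \<in> Diag n"
  obtains i j where "D = {i,j}" "i \<in> {1..n}" "j \<in> {1..n}" "i \<noteq> j"
    "(int i - int j) mod int n \<noteq> 1 mod int n" "(int i - int j) mod int n \<noteq> (-1) mod int n"
  using assms unfolding Diag_def by blast

lemma t1: "x < (al::nat) \<or> x > be \<Longrightarrow> y = al + 1 \<Longrightarrow> al + 2 \<le> be \<Longrightarrow> crl al be y x"
  unfolding crl_def betw_alt by auto
lemma t2: "crl al (al+2) y x \<Longrightarrow> (y = al + 1 \<and> (x < al \<or> x > al + 2)) \<or> (x = al + 1 \<and> (y < al \<or> y > al + 2))"
  unfolding crl_def betw_alt by auto
lemma key:
  assumes n3: "n \<ge> 3" and v: "v \<in> {1..n}" and Tdef: "T = {D \<in> Diag n. v \<in> D}"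
    and T: "T \<in> triangulations n" and T': "T' \<in> triangulations n" and ne: "T' \<noteq> T"
  shows "\<exists>\<alpha> a f. 1 \<le> \<alpha> \<and> \<alpha> + 3 \<le> n \<and> a \<in> {1..n} \<and> f \<in> {1..n} \<and>
            qq n v a = \<alpha> \<and> qq n v f = \<alpha> + 2 \<and> {a, f} \<in> T'"
proof -
  define q where "q = qq n v"
  have Tsub: "T' \<subseteq> Diag n" and ncT': "noncrossing T'"
    and maxT': "\<And>D. D \<in> Diag n - T' \<Longrightarrow> \<not> noncrossing (insert D T')"
    using T' unfolding triangulations_def by auto
  have ncT: "noncrossing T" using T unfolding triangulations_def by auto
  have "\<exists>D\<in>T'. v \<notin> D"
  proof (rule ccontr)
    assume "\<not> ?thesis"
    then have "T' \<subseteq> T" using Tsub Tdef by auto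
    then obtain D where D: "D \<in> T" "D \<notin> T'" using ne by blast
    then have "D \<in> Diag n - T'" using Tdef by auto
    moreover have "noncrossing (insert D T')"
      using ncT D \<open>T' \<subseteq> T\<close> unfolding noncrossing_def by blast
    ultimately show False using maxT' by blast
  qed
  then obtain D where D: "D \<in> T'" "v \<notin> D" by blast
  then obtain i j where ij: "D = {i,j}" "i \<in> {1..n}" "j \<in> {1..n}" "i \<noteq> j"
    using Tsub diag_elim by blast
  define P where "P k \<longleftrightarrow> (\<exists>a b. {a,b} \<in> T' \<and> a \<in> {1..n} \<and> b \<in> {1..n} \<and> a \<noteq> v \<and> b \<noteq> v
        \<and> q a < q b \<and> q b - q a = k)" for k
  have "q i \<noteq> q j" using qq_inj[OF v ij(2,3)] ij(4) unfolding q_def by simp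
  then have "\<exists>k. P k"
  proof (cases "q i < q j")
    case True then show ?thesis unfolding P_def using D ij by blast
  next
    case False
    then have "q j < q i" using \<open>q i \<noteq> q j\<close> by simp
    moreover have "{j,i} \<in> T'" using D ij by (simp add: insert_commute)
    ultimately show ?thesis unfolding P_def using D ij by blast
  qed
  then obtain k where Pk: "P k" and kmin: "\<And>m. m < k \<Longrightarrow> \<not> P m"
    using exists_least_iff[of P] by blast
  then obtain a b where ab: "{a,b} \<in> T'" "a \<in> {1..n}" "b \<in> {1..n}" "a \<noteq> v" "b \<noteq> v"
    "q a < q b" "q b - q a = k" unfolding P_def by blast
  define \<alpha> where "\<alpha> = q a"
  define \<beta> where "\<beta> = q b"
  have a1: "1 \<le> \<alpha>" using qq_zero[OF v ab(2)] ab(4) unfolding \<alpha>_def q_def by simp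
  have bn: "\<beta> < n" using qq_lt[OF v ab(3)] unfolding \<beta>_def q_def by simp
  have mab: "(int a - int b) mod int n = (int \<alpha> - int \<beta>) mod int n"
    using qq_mod[OF v ab(2,3)] unfolding \<alpha>_def \<beta>_def q_def by simp
  have mba: "(int b - int a) mod int n = (int \<beta> - int \<alpha>) mod int n"
    using qq_mod[OF v ab(3,2)] unfolding \<alpha>_def \<beta>_def q_def by simp
  have b2: "\<alpha> + 2 \<le> \<beta>"
  proof (rule ccontr)
    assume "\<not> ?thesis"
    then have e: "\<beta> = \<alpha> + 1" using ab(6) unfolding \<alpha>_def \<beta>_def by simp
    obtain i' j' where ij': "{a,b} = {i',j'}"
      "(int i' - int j') mod int n \<noteq> 1 mod int n" "(int i' - int j') mod int n \<noteq> (-1) mod int n"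
      using diag_elim[of "{a,b}" n] Tsub ab(1) by (metis subsetD)
    have "(i' = a \<and> j' = b) \<or> (i' = b \<and> j' = a)" using ij'(1) by (auto simp: doubleton_eq_iff)
    then show False using ij'(2,3) mab mba e by auto
  qed
  have n4: "n \<ge> 4" using a1 b2 bn by simp
  obtain f where f: "f \<in> {1..n}" "q f = \<alpha> + 2"
    using qq_surj[OF v, of "\<alpha> + 2"] b2 bn unfolding q_def by auto
  have maf: "(int a - int f) mod int n = (-2) mod int n"
    using qq_mod[OF v ab(2) f(1)] f(2) unfolding \<alpha>_def q_def by simp
  have af: "a \<noteq> f" using f(2) unfolding \<alpha>_def by auto
  have "(-2) mod int n \<noteq> 1 mod int n"
  proof
    assume "(-2) mod int n = 1 mod int n"
    then have "int n dvd (-2) - 1" by (simp add: mod_eq_dvd_iff)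
    then have "int n dvd 3" by simp
    then have "int n \<le> 3" using zdvd_imp_le[of "int n" 3] by simp
    then show False using n4 by simp
  qed
  moreover have "(-2) mod int n \<noteq> (-1) mod int n"
  proof
    assume "(-2) mod int n = (-1) mod int n"
    then have "int n dvd (-2) - (-1)" by (simp add: mod_eq_dvd_iff)
    then have "int n dvd 1" by simp
    then show False using n4 by simp
  qed
  ultimately have Ediag: "{a,f} \<in> Diag n"
    unfolding Diag_def mem_Collect_eq using ab(2) f(1) af maf
    by (intro exI[of _ a] exI[of _ f]) simp
  have crossG: False if G: "G \<in> T'" and cr: "crosses {a,f} G" for G
  proof -
    obtain g h where gh: "G = {g,h}" "g \<in> {1..n}" "h \<in> {1..n}" "g \<noteq> h"
      using diag_elim[of G n] Tsub G by (metis subsetD)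
    have sub: False if g': "g' \<in> {1..n}" "h' \<in> {1..n}" "G = {g',h'}" "q g' = \<alpha> + 1"
       "q h' < \<alpha> \<or> q h' > \<alpha> + 2" for g' h'
    proof (cases "q h' < \<alpha> \<or> q h' > \<beta>")
      case True
      have "crl \<alpha> \<beta> (q g') (q h')" using t1[of "q h'" \<alpha> \<beta> "q g'"] True g'(4) b2 by simp
      then have "crl a b g' h'" using crl_qq[OF v ab(2,3) g'(1,2)] unfolding \<alpha>_def \<beta>_def q_def by simp
      then have "crosses {a,b} G" using crosses_iff g'(3) by simp
      then show False using ncT' ab(1) G unfolding noncrossing_def by blast
    next
      case False
      then have "\<alpha> + 2 < q h'" "q h' \<le> \<beta>" using g'(5) by auto
      have "g' \<noteq> v" using qq_zero[OF v g'(1)] g'(4) unfolding q_def by auto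
      moreover have "h' \<noteq> v" using qq_zero[OF v g'(2)] \<open>\<alpha> + 2 < q h'\<close> unfolding q_def by auto
      ultimately have "P (q h' - q g')" unfolding P_def using G g' \<open>\<alpha> + 2 < q h'\<close>
        by (intro exI[of _ g'] exI[of _ h']) auto
      moreover have "q h' - q g' < k" using \<open>q h' \<le> \<beta>\<close> g'(4) ab(6,7) a1 unfolding \<alpha>_def \<beta>_def by simp
      ultimately show False using kmin by blast
    qed
    have "crl a f g h" using cr gh crosses_iff by simp
    then have c: "crl \<alpha> (\<alpha> + 2) (q g) (q h)"
      using crl_qq[OF v ab(2) f(1) gh(2,3)] f(2) unfolding \<alpha>_def q_def by simp
    then have "(q g = \<alpha> + 1 \<and> (q h < \<alpha> \<or> q h > \<alpha> + 2)) \<or> (q h = \<alpha> + 1 \<and> (q g < \<alpha> \<or> q g > \<alpha> + 2))"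
      by (rule t2)
    then show False
    proof
      assume "q g = \<alpha> + 1 \<and> (q h < \<alpha> \<or> q h > \<alpha> + 2)"
      then show False using sub[of g h] gh by blast
    next
      assume "q h = \<alpha> + 1 \<and> (q g < \<alpha> \<or> q g > \<alpha> + 2)"
      then show False using sub[of h g] gh by (metis insert_commute)
    qed
  qed
  have "\<not> crosses {a,f} {a,f}" using crosses_iff unfolding crl_def by simp
  then have "noncrossing (insert {a,f} T')"
    using ncT' crossG crosses_sym unfolding noncrossing_def by blast
  then have "{a,f} \<in> T'" using maxT' Ediag by blast
  moreover have "\<alpha> + 3 \<le> n" using b2 bn by simp
  moreover have "qq n v a = \<alpha>" "qq n v f = \<alpha> + 2" using f(2) unfolding \<alpha>_def q_def by simp_all
  ultimately show ?thesis using a1 ab(2) f(1) by blast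
qed


theorem lemma3p4:
  fixes n :: nat and T :: "nat set set"
  assumes "n \<ge> 3"
    and "star_triangulation n T"
  shows "chromatic_number (triangulations n - {T}) KG_adj \<le> n - 3"
proof -
  obtain v where v: "v \<in> {1..n}" and Tdef: "T = {D \<in> Diag n. v \<in> D}" and T: "T \<in> triangulations n"
    using assms(2) unfolding star_triangulation_def by blast
  define Q where "Q X \<alpha> \<longleftrightarrow> 1 \<le> \<alpha> \<and> \<alpha> + 3 \<le> n \<and> (\<exists>a f. a \<in> {1..n} \<and> f \<in> {1..n} \<and>
            qq n v a = \<alpha> \<and> qq n v f = \<alpha> + 2 \<and> {a, f} \<in> X)" for X \<alpha>
  define c where "c X = (SOME \<alpha>. Q X \<alpha>) - 1" for X
  have HQ: "Q X (SOME \<alpha>. Q X \<alpha>)" if "X \<in> triangulations n - {T}" for X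
  proof -
    have "\<exists>\<alpha>. Q X \<alpha>" using key[OF assms(1) v Tdef T, of X] that unfolding Q_def by blast
    then show ?thesis by (rule someI_ex)
  qed
  have col: "(\<forall>x\<in>triangulations n - {T}. c x < n - 3) \<and>
      (\<forall>x\<in>triangulations n - {T}. \<forall>y\<in>triangulations n - {T}. KG_adj x y \<longrightarrow> c x \<noteq> c y)"
  proof (intro conjI ballI impI)
    fix x assume "x \<in> triangulations n - {T}"
    then show "c x < n - 3" using HQ[of x] unfolding c_def Q_def by auto
  next
    fix x y assume x: "x \<in> triangulations n - {T}" and y: "y \<in> triangulations n - {T}"
      and adj: "KG_adj x y"
    show "c x \<noteq> c y"
    proof
      assume e: "c x = c y"
      define \<alpha> where "\<alpha> = (SOME \<alpha>. Q x \<alpha>)"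
      define \<beta> where "\<beta> = (SOME \<alpha>. Q y \<alpha>)"
      have Qx: "Q x \<alpha>" using HQ[OF x] unfolding \<alpha>_def .
      have Qy: "Q y \<beta>" using HQ[OF y] unfolding \<beta>_def .
      have "1 \<le> \<alpha>" "1 \<le> \<beta>" using Qx Qy unfolding Q_def by auto
      moreover have "\<alpha> - 1 = \<beta> - 1" using e unfolding c_def \<alpha>_def[symmetric] \<beta>_def[symmetric] .
      ultimately have "\<alpha> = \<beta>" by linarith
      obtain a f where af: "a \<in> {1..n}" "f \<in> {1..n}" "qq n v a = \<alpha>" "qq n v f = \<alpha> + 2" "{a, f} \<in> x"
        using Qx unfolding Q_def by blast
      obtain a' f' where af': "a' \<in> {1..n}" "f' \<in> {1..n}" "qq n v a' = \<beta>" "qq n v f' = \<beta> + 2" "{a', f'} \<in> y"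
        using Qy unfolding Q_def by blast
      have "a = a'" using qq_inj[OF v af(1) af'(1)] af(3) af'(3) \<open>\<alpha> = \<beta>\<close> by simp
      moreover have "f = f'" using qq_inj[OF v af(2) af'(2)] af(4) af'(4) \<open>\<alpha> = \<beta>\<close> by simp
      ultimately have "{a, f} \<in> x \<inter> y" using af(5) af'(5) by simp
      then show False using adj unfolding KG_adj_def by blast
    qed
  qed
  show ?thesis unfolding chromatic_number_def
    by (rule Least_le) (rule exI[of _ c], rule col)
qed

end
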